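(* Let $1\leq e_1\leq\cdots\leq e_m$ be integers and let $b_i$ be integers with $0\leq b_i\leq e_i-1$ for $i=1,\ldots,m$. Then for every $k=1,\ldots,m$, $$\prod_{i=1}^m(e_i-b_i)\geq\Big(\sum_{i=1}^k(e_i-b_i)-(k-1)-\sum_{i=k+1}^m b_i\Big)e_{k+1}\cdots e_m,$$ where for $k=m$ the product $e_{k+1}\cdots e_m$ is $1$ and the sum $\sum_{i=k+1}^m b_i$ is $0$. *)

theory Defs
  imports Main
begin

end

theory Submission
  imports Defs
begin

lemma G_nil:
  fixes ds :: "int list"
  assumes "\<forall>d\<in>set ds. 1 \<le> d"
  shows "prod_list ds * (1 - sum_list (map (\<lambda>d. d - 1) ds)) \<le> 1 \<and> prod_list ds \<ge> 1
         \<and> sum_list (map (\<lambda>d. d - 1) ds) \<ge> 0"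
  using assms
proof (induction ds)
  case Nil
  then show ?case by simp
next
  case (Cons d ds)
  define P where "P = prod_list ds"
  define w where "w = 1 - sum_list (map (\<lambda>d. d - 1) ds)"
  have IH: "P * w \<le> 1" "P \<ge> 1" "w \<le> 1" using Cons by (auto simp: P_def w_def)
  have d1: "d \<ge> 1" using Cons.prems by simp
  have "d * (w - d + 1) \<le> w"
  proof -
    have "(d - 1) * (w - d) \<le> 0" using d1 IH(3) by (simp add: mult_nonneg_nonpos)
    then show ?thesis by (simp add: algebra_simps)
  qed
  then have "P * (d * (w - d + 1)) \<le> P * w" using IH(2) by (simp add: mult_left_mono)
  then have "P * (d * (w - d + 1)) \<le> 1" using IH(1) by linarith
  have A2: "prod_list (d # ds) \<ge> 1"
  proof -
    have "d * P \<ge> 1 * 1" using IH(2) d1 by (intro mult_mono) auto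
    then show ?thesis unfolding P_def by simp
  qed
  have A3: "sum_list (map (\<lambda>d. d - 1) (d # ds)) \<ge> 0" using IH(3) d1 unfolding w_def by simp
  have eqn: "prod_list (d # ds) * (1 - sum_list (map (\<lambda>d. d - 1) (d # ds))) = P * (d * (w - d + 1))"
    unfolding w_def P_def by (simp add: algebra_simps)
  have A1: "prod_list (d # ds) * (1 - sum_list (map (\<lambda>d. d - 1) (d # ds))) \<le> 1"
    unfolding eqn by fact
  show ?case using A1 A2 A3 by blast
qed

lemma G:
  fixes as ds :: "int list"
  assumes "\<forall>a\<in>set as. 1 \<le> a" "\<forall>d\<in>set ds. 1 \<le> d \<and> (\<forall>a\<in>set as. a \<le> d)"
  shows "prod_list as \<ge> prod_list ds * (1 + sum_list (map (\<lambda>a. a - 1) as) - sum_list (map (\<lambda>d. d - 1) ds))"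
  using assms
proof (induction as arbitrary: ds)
  case Nil
  then show ?case using G_nil[of ds] by simp
next
  case (Cons a as)
  define S where "S = sum_list (map (\<lambda>a. a - 1) as)"
  define L where "L = prod_list as"
  have a1: "a \<ge> 1" using Cons.prems by simp
  have S0: "S \<ge> 0" unfolding S_def using Cons.prems by (intro sum_list_nonneg) auto
  show ?case
  proof (cases "S - sum_list (map (\<lambda>d. d - 1) ds) \<ge> 0")
    case True
    define y where "y = S - sum_list (map (\<lambda>d. d - 1) ds)"
    define X where "X = prod_list ds"
    have X0: "X \<ge> 0" unfolding X_def using Cons.prems by (intro prod_list_nonneg) auto
    have IH: "L \<ge> X * (1 + y)" using Cons.IH[of ds] Cons.prems
      unfolding L_def X_def y_def S_def by (simp add: add_diff_eq)
    have "a * L \<ge> a * (X * (1 + y))" using IH a1 by (simp add: mult_left_mono)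
    moreover have "a * (X * (1 + y)) \<ge> X * (1 + y + a - 1)"
    proof -
      have "(a - 1) * y \<ge> 0" using a1 True by (simp add: y_def)
      then have "X * ((a - 1) * y) \<ge> 0" using X0 by simp
      then show ?thesis by (simp add: algebra_simps)
    qed
    ultimately show ?thesis by (simp add: L_def X_def y_def S_def algebra_simps)
  next
    case False
    then obtain d ds' where ds: "ds = d # ds'"
      using S0 by (cases ds) auto
    define X' where "X' = prod_list ds'"
    define z where "z = 1 + S - sum_list (map (\<lambda>d. d - 1) ds)"
    have X0: "X' \<ge> 0" unfolding X'_def using Cons.prems ds by (intro prod_list_nonneg) auto
    have z0: "z \<le> 0" using False by (simp add: z_def)
    have ad: "a \<le> d" using Cons.prems ds by auto
    have IH: "L \<ge> X' * (z + d - 1)" using Cons.IH[of ds'] Cons.prems ds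
      by (auto simp: L_def X'_def z_def S_def add_diff_eq)
    have "a * L \<ge> a * (X' * (z + d - 1))" using IH a1 by (simp add: mult_left_mono)
    moreover have "a * (X' * (z + d - 1)) \<ge> d * X' * (z + a - 1)"
    proof -
      have "(d - a) * (1 - z) \<ge> 0" using ad z0 by simp
      then have "X' * ((d - a) * (1 - z)) \<ge> 0" using X0 by simp
      then show ?thesis by (simp add: algebra_simps)
    qed
    ultimately show ?thesis using ds by (simp add: L_def X'_def z_def S_def algebra_simps)
  qed
qed

lemma core:
  fixes as ds :: "int list" and ps :: "(int \<times> int) list"
  assumes "\<forall>a\<in>set as. 1 \<le> a" "\<forall>d\<in>set ds. 1 \<le> d \<and> (\<forall>a\<in>set as. a \<le> d)"
    "\<forall>(e,b)\<in>set ps. 0 \<le> b \<and> b \<le> e - 1 \<and> (\<forall>a\<in>set as. a \<le> e)"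
  shows "prod_list as * prod_list (map (\<lambda>(e,b). e - b) ps) \<ge>
    prod_list ds * prod_list (map fst ps) *
     (1 + sum_list (map (\<lambda>a. a - 1) as) - sum_list (map (\<lambda>d. d - 1) ds) - sum_list (map snd ps))"
  using assms
proof (induction ps arbitrary: ds)
  case Nil
  then show ?case using G[of as ds] by simp
next
  case (Cons p ps)
  obtain e b where p: "p = (e, b)" by (cases p)
  define L1 where "L1 = prod_list as * prod_list (map (\<lambda>(e,b). e - b) ps)"
  define Y where "Y = prod_list ds * prod_list (map fst ps)"
  define W where "W = 1 + sum_list (map (\<lambda>a. a - 1) as) - sum_list (map (\<lambda>d. d - 1) ds) - sum_list (map snd ps)"
  have eb: "0 \<le> b" "b \<le> e - 1" "\<forall>a\<in>set as. a \<le> e" using Cons.prems p by auto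
  have IH1: "L1 \<ge> Y * W" using Cons.IH[of ds] Cons.prems by (auto simp: L1_def Y_def W_def)
  have IH2: "L1 \<ge> e * Y * (W - (e - 1))" using Cons.IH[of "e # ds"] Cons.prems eb
    by (auto simp: L1_def Y_def W_def algebra_simps)
  have key: "(e - 1) * ((e - b) * L1 - e * Y * (W - b)) =
     (e - 1 - b) * e * (L1 - Y * W) + b * (L1 - e * Y * (W - (e - 1)))"
    by (simp add: algebra_simps)
  have t: "(e - b) * L1 - e * Y * (W - b) \<ge> 0"
  proof (cases "e = 1")
    case True
    then have "b = 0" using eb by simp
    then show ?thesis using True IH1 by simp
  next
    case False
    then have e1: "e - 1 > 0" using eb by simp
    have "(e - 1 - b) * e * (L1 - Y * W) \<ge> 0" using eb IH1 e1 by simp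
    moreover have "b * (L1 - e * Y * (W - (e - 1))) \<ge> 0" using eb IH2 by simp
    ultimately have "(e - 1) * ((e - b) * L1 - e * Y * (W - b)) \<ge> 0" using key by linarith
    then show ?thesis using e1 by (simp add: zero_le_mult_iff)
  qed
  have l: "prod_list as * prod_list (map (\<lambda>(e,b). e - b) (p # ps)) = (e - b) * L1"
    by (simp add: p L1_def ac_simps)
  have r: "prod_list ds * prod_list (map fst (p # ps)) *
     (1 + sum_list (map (\<lambda>a. a - 1) as) - sum_list (map (\<lambda>d. d - 1) ds) - sum_list (map snd (p # ps)))
     = e * Y * (W - b)"
    by (simp add: p Y_def W_def ac_simps diff_diff_eq)
  show ?case using t l r by linarith
qed

theorem lemma5p5:
  fixes e b :: "nat \<Rightarrow> int" and m k :: nat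
  assumes e_pos: "\<forall>i\<in>{1..m}. 1 \<le> e i"
    and e_mono: "\<forall>i\<in>{1..m}. \<forall>j\<in>{1..m}. i \<le> j \<longrightarrow> e i \<le> e j"
    and b_bounds: "\<forall>i\<in>{1..m}. 0 \<le> b i \<and> b i \<le> e i - 1"
    and k: "1 \<le> k" "k \<le> m"
  shows "(\<Prod>i=1..m. e i - b i) \<ge>
    ((\<Sum>i=1..k. e i - b i) - (int k - 1) - (\<Sum>i=k+1..m. b i)) * (\<Prod>i=k+1..m. e i)"
proof -
  define as where "as = map (\<lambda>i. e i - b i) [1..<k+1]"
  define ps where "ps = map (\<lambda>i. (e i, b i)) [k+1..<m+1]"
  have bb: "\<And>j. 1 \<le> j \<Longrightarrow> j \<le> m \<Longrightarrow> 0 \<le> b j \<and> b j \<le> e j - 1"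
    using b_bounds by auto
  have h1: "\<forall>a\<in>set as. 1 \<le> a"
  proof
    fix a assume "a \<in> set as"
    then obtain i where "1 \<le> i" "i \<le> k" "a = e i - b i" by (auto simp: as_def)
    then show "1 \<le> a" using bb[of i] k by auto
  qed
  have mono: "\<And>i j. 1 \<le> i \<Longrightarrow> i \<le> k \<Longrightarrow> k < j \<Longrightarrow> j \<le> m \<Longrightarrow> e i - b i \<le> e j"
  proof -
    fix i j assume "1 \<le> i" "i \<le> k" "k < j" "j \<le> m"
    then have "e i \<le> e j" "0 \<le> b i" using e_mono bb[of i] k by auto
    then show "e i - b i \<le> e j" by simp
  qed
  have h3: "\<forall>(x,y)\<in>set ps. 0 \<le> y \<and> y \<le> x - 1 \<and> (\<forall>a\<in>set as. a \<le> x)"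
    unfolding ps_def as_def using bb mono by auto
  have C: "prod_list as * prod_list (map (\<lambda>(e,b). e - b) ps) \<ge>
    prod_list (map fst ps) * (1 + sum_list (map (\<lambda>a. a - 1) as) - sum_list (map snd ps))"
    using core[OF h1 _ h3, of "[]"] by simp
  have st: "set [1..<k+1] = {1..k}" by auto
  have p1: "prod_list as = (\<Prod>i=1..k. e i - b i)"
    unfolding as_def st[symmetric] by (simp only: prod.distinct_set_conv_list distinct_upt)
  have st2: "set [k+1..<m+1] = {k+1..m}" by auto
  have p2: "prod_list (map (\<lambda>(e,b). e - b) ps) = (\<Prod>i=k+1..m. e i - b i)"
  proof -
    have "map (\<lambda>(e,b). e - b) ps = map (\<lambda>i. e i - b i) [k+1..<m+1]" by (simp add: ps_def)
    then show ?thesis unfolding st2[symmetric] by (simp only: prod.distinct_set_conv_list distinct_upt)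
  qed
  have p3: "prod_list (map fst ps) = (\<Prod>i=k+1..m. e i)"
  proof -
    have "map fst ps = map e [k+1..<m+1]" by (simp add: ps_def)
    then show ?thesis unfolding st2[symmetric] by (simp only: prod.distinct_set_conv_list distinct_upt)
  qed
  have s1: "sum_list (map (\<lambda>a. a - 1) as) = (\<Sum>i=1..k. e i - b i) - int k"
  proof -
    have "map (\<lambda>a. a - 1) as = map (\<lambda>i. e i - b i - 1) [1..<k+1]" by (simp add: as_def)
    then have "sum_list (map (\<lambda>a. a - 1) as) = (\<Sum>i=1..k. e i - b i - 1)"
      unfolding st[symmetric] by (simp only: sum.distinct_set_conv_list distinct_upt)
    then show ?thesis by (simp add: sum_subtractf)
  qed
  have s2: "sum_list (map snd ps) = (\<Sum>i=k+1..m. b i)"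
  proof -
    have "map snd ps = map b [k+1..<m+1]" by (simp add: ps_def)
    then show ?thesis unfolding st2[symmetric] by (simp only: sum.distinct_set_conv_list distinct_upt)
  qed
  have split: "(\<Prod>i=1..m. e i - b i) = (\<Prod>i=1..k. e i - b i) * (\<Prod>i=k+1..m. e i - b i)"
  proof -
    have "{1..m} = {1..k} \<union> {k+1..m}" using k by auto
    then show ?thesis by (simp add: prod.union_disjoint)
  qed
  have C2: "(\<Prod>i=1..k. e i - b i) * (\<Prod>i=k+1..m. e i - b i) \<ge>
    (\<Prod>i=k+1..m. e i) * (1 + ((\<Sum>i=1..k. e i - b i) - int k) - (\<Sum>i=k+1..m. b i))"
    using C unfolding p1 p2 p3 s1 s2 .
  have eq: "1 + ((\<Sum>i=1..k. e i - b i) - int k) - (\<Sum>i=k+1..m. b i) =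
    (\<Sum>i=1..k. e i - b i) - (int k - 1) - (\<Sum>i=k+1..m. b i)" by simp
  show ?thesis using C2 unfolding split eq by (simp only: mult.commute)
qed

end
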